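(* The detour sequence of every unicyclic graph is full; that is, if $G$ is a connected graph containing exactly one cycle and $d_1\le d_2\le \cdots\le d_n$ is its detour sequence, then every integer $k$ with $d_1\le k\le d_n$ equals some $d_j$.
   Context: All graphs are finite and simple. A unicyclic graph is a connected graph with exactly one cycle. The order of a path is its number of vertices. For a vertex $v$ of $G$, $\tau(v)$ is the order of a longest path in $G$ having $v$ as an endvertex. The detour sequence of $G$ is the nondecreasing sequence of the values $\tau(v)$, $v\in V(G)$ (one term per vertex). *)

theory Defs
  imports Main "HOL-Library.Multiset"
begin

definition simple_graph :: "'a set \<Rightarrow> ('a \<Rightarrow> 'a \<Rightarrow> bool) \<Rightarrow> bool" where
  "simple_graph V E \<longleftrightarrow> finite V \<and> (\<forall>x y. E x y \<longrightarrow> x \<in> V \<and> y \<in> V)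
     \<and> (\<forall>x y. E x y \<longrightarrow> E y x) \<and> (\<forall>x. \<not> E x x)"

(* A path, given as its (nonempty) list of distinct vertices; its order is the length. *)
definition is_path :: "'a set \<Rightarrow> ('a \<Rightarrow> 'a \<Rightarrow> bool) \<Rightarrow> 'a list \<Rightarrow> bool" where
  "is_path V E p \<longleftrightarrow> p \<noteq> [] \<and> distinct p \<and> set p \<subseteq> V
     \<and> (\<forall>i. Suc i < length p \<longrightarrow> E (p ! i) (p ! Suc i))"

definition connected_graph :: "'a set \<Rightarrow> ('a \<Rightarrow> 'a \<Rightarrow> bool) \<Rightarrow> bool" where
  "connected_graph V E \<longleftrightarrow> V \<noteq> {} \<and>
     (\<forall>x\<in>V. \<forall>y\<in>V. \<exists>p. is_path V E p \<and> hd p = x \<and> last p = y)"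

definition is_cycle_seq :: "'a set \<Rightarrow> ('a \<Rightarrow> 'a \<Rightarrow> bool) \<Rightarrow> 'a list \<Rightarrow> bool" where
  "is_cycle_seq V E c \<longleftrightarrow> length c \<ge> 3 \<and> is_path V E c \<and> E (last c) (hd c)"

(* The edge set of the cycle (as unordered pairs encoded by two-element sets);
   the cycle as a subgraph is determined by this edge set. *)
definition cycle_edges :: "'a list \<Rightarrow> 'a set set" where
  "cycle_edges c = {{c ! i, c ! ((Suc i) mod length c)} | i. i < length c}"

definition cycles :: "'a set \<Rightarrow> ('a \<Rightarrow> 'a \<Rightarrow> bool) \<Rightarrow> 'a set set set" where
  "cycles V E = {cycle_edges c | c. is_cycle_seq V E c}"

definition unicyclic :: "'a set \<Rightarrow> ('a \<Rightarrow> 'a \<Rightarrow> bool) \<Rightarrow> bool" where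
  "unicyclic V E \<longleftrightarrow> simple_graph V E \<and> connected_graph V E \<and> card (cycles V E) = 1"

definition tau :: "'a set \<Rightarrow> ('a \<Rightarrow> 'a \<Rightarrow> bool) \<Rightarrow> 'a \<Rightarrow> nat" where
  "tau V E v = Max {length p | p. is_path V E p \<and> hd p = v}"

definition detour_sequence :: "'a set \<Rightarrow> ('a \<Rightarrow> 'a \<Rightarrow> bool) \<Rightarrow> nat list" where
  "detour_sequence V E = sorted_list_of_multiset (image_mset (tau V E) (mset_set V))"

end

theory Submission
  imports Defs
begin

lemma sg_props:
  assumes "simple_graph V E"
  shows "finite V" "E x y \<Longrightarrow> x \<in> V" "E x y \<Longrightarrow> y \<in> V" "E x y \<Longrightarrow> E y x" "\<not> E x x"
  using assms unfolding simple_graph_def by blast+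

lemma path_len_le:
  assumes "simple_graph V E" "is_path V E p"
  shows "length p \<le> card V"
proof -
  have "length p = card (set p)" using assms(2) distinct_card[of p] unfolding is_path_def by simp
  also have "\<dots> \<le> card V" using assms sg_props(1)[OF assms(1)] unfolding is_path_def
    by (simp add: card_mono)
  finally show ?thesis .
qed

lemma tau_ge:
  assumes "simple_graph V E" "is_path V E p"
  shows "length p \<le> tau V E (hd p)"
proof -
  have fin: "finite {length q | q. is_path V E q \<and> hd q = hd p}"
    by (rule finite_subset[of _ "{..card V}"]) (use path_len_le[OF assms(1)] in auto)
  show ?thesis unfolding tau_def by (rule Max_ge[OF fin]) (use assms in auto)
qed

lemma tau_attained:
  assumes "simple_graph V E" "v \<in> V"
  shows "\<exists>p. is_path V E p \<and> hd p = v \<and> length p = tau V E v"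
proof -
  let ?S = "{length p | p. is_path V E p \<and> hd p = v}"
  have fin: "finite ?S"
    by (rule finite_subset[of _ "{..card V}"]) (use path_len_le[OF assms(1)] in auto)
  have "is_path V E [v]" using assms(2) unfolding is_path_def by auto
  then have ne: "?S \<noteq> {}" by force
  have "Max ?S \<in> ?S" using Max_in[OF fin ne] .
  then show ?thesis unfolding tau_def by auto
qed

lemma path_cons:
  assumes "is_path V E p" "x \<in> V" "x \<notin> set p" "E x (hd p)"
  shows "is_path V E (x # p)"
  unfolding is_path_def
proof (intro conjI allI impI)
  fix i assume "Suc i < length (x # p)"
  then show "E ((x # p) ! i) ((x # p) ! Suc i)"
    using assms unfolding is_path_def by (cases i) (auto simp: hd_conv_nth)
qed (use assms in \<open>auto simp: is_path_def\<close>)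

lemma path_drop:
  assumes "is_path V E p" "j < length p"
  shows "is_path V E (drop j p)"
  using assms unfolding is_path_def
  by (auto simp: distinct_drop dest: in_set_dropD)

lemma path_take:
  assumes "is_path V E p" "0 < n"
  shows "is_path V E (take n p)"
  using assms unfolding is_path_def
  by (auto simp: dest: in_set_takeD)

lemma path_rev:
  assumes "simple_graph V E" "is_path V E p"
  shows "is_path V E (rev p)"
  unfolding is_path_def
proof (intro conjI allI impI)
  fix i assume i: "Suc i < length (rev p)"
  have "E (p ! (length p - Suc (Suc i))) (p ! Suc (length p - Suc (Suc i)))"
    using assms(2) i unfolding is_path_def by auto
  moreover have "Suc (length p - Suc (Suc i)) = length p - Suc i" using i by simp
  ultimately have "E (p ! (length p - Suc (Suc i))) (p ! (length p - Suc i))" by simp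
  then show "E (rev p ! i) (rev p ! Suc i)" using i sg_props(4)[OF assms(1)]
    by (simp add: rev_nth)
qed (use assms in \<open>auto simp: is_path_def\<close>)

lemma jump_cycle:
  assumes sg: "simple_graph V E" and e: "E x y" and gap: "tau V E x + 2 \<le> tau V E y"
  shows "\<exists>P j. is_path V E P \<and> hd P = y \<and> length P = tau V E y \<and> 2 \<le> j \<and> j < length P
      \<and> P ! j = x \<and> is_cycle_seq V E (take (Suc j) P) \<and> {x, y} \<in> cycle_edges (take (Suc j) P)"
proof -
  have xV: "x \<in> V" and yV: "y \<in> V" using sg_props[OF sg] e by auto
  obtain P where P: "is_path V E P" "hd P = y" "length P = tau V E y"
    using tau_attained[OF sg yV] by blast
  have Pne: "P \<noteq> []" using P unfolding is_path_def by auto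
  have "x \<in> set P"
  proof (rule ccontr)
    assume "x \<notin> set P"
    then have "is_path V E (x # P)" using path_cons[OF P(1) xV] e P(2) by auto
    from tau_ge[OF sg this] have "length P + 1 \<le> tau V E x" by simp
    then show False using gap P(3) by simp
  qed
  then obtain j where j: "j < length P" "P ! j = x" by (auto simp: in_set_conv_nth)
  have "j \<noteq> 0"
  proof
    assume "j = 0"
    then have "x = y" using j P(2) Pne by (simp add: hd_conv_nth)
    then show False using e sg_props(5)[OF sg, of x] by simp
  qed
  moreover have "j \<noteq> 1"
  proof
    assume j1: "j = 1"
    have "is_path V E (drop 1 P)" using path_drop[OF P(1) j(1)] j1 by simp
    from tau_ge[OF sg this] have "length P - 1 \<le> tau V E x"
      using j j1 by (simp add: hd_drop_conv_nth)
    then show False using gap P(3) by simp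
  qed
  ultimately have j2: "2 \<le> j" by simp
  let ?c = "take (Suc j) P"
  have lc: "length ?c = Suc j" using j by simp
  have cp: "is_path V E ?c" using path_take[OF P(1)] by simp
  have lastc: "last ?c = x" using j lc by (subst last_conv_nth) auto
  have hdc: "hd ?c = y" using P(2) Pne by (simp add: hd_conv_nth)
  have cyc: "is_cycle_seq V E ?c" unfolding is_cycle_seq_def using lc j2 cp lastc hdc e by simp
  have "\<exists>i. {?c ! j, ?c ! (Suc j mod length ?c)} = {?c ! i, ?c ! (Suc i mod length ?c)} \<and> i < length ?c"
    using lc by (intro exI[of _ j]) simp
  then have "{?c ! j, ?c ! (Suc j mod length ?c)} \<in> cycle_edges ?c"
    unfolding cycle_edges_def by simp
  moreover have "?c ! j = x" using j by simp
  moreover have "?c ! (Suc j mod length ?c) = y" using lc hdc Pne by (simp add: hd_conv_nth)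
  ultimately have "{x, y} \<in> cycle_edges ?c" by simp
  then show ?thesis using P j j2 cyc by (intro exI[of _ P] exI[of _ j]) simp
qed

lemma cycle_edge_mem:
  assumes "{u, w} \<in> cycle_edges c"
  shows "w \<in> set c"
proof -
  obtain i where i: "i < length c" "{u, w} = {c ! i, c ! (Suc i mod length c)}"
    using assms unfolding cycle_edges_def by blast
  have "0 < length c" using i(1) by linarith
  then have "Suc i mod length c < length c" by simp
  then have "c ! (Suc i mod length c) \<in> set c" by (rule nth_mem)
  moreover have "c ! i \<in> set c" by (rule nth_mem) (rule i(1))
  moreover have "w \<in> {c ! i, c ! (Suc i mod length c)}" using i(2) by blast
  ultimately show ?thesis by auto
qed

lemma list_ivt:
  fixes f :: "'a \<Rightarrow> nat"
  assumes "p \<noteq> []" "set p \<subseteq> V"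
    and "\<forall>i. Suc i < length p \<longrightarrow> (\<forall>k. min (f (p ! i)) (f (p ! Suc i)) \<le> k
          \<and> k \<le> max (f (p ! i)) (f (p ! Suc i)) \<longrightarrow> k \<in> f ` V)"
  shows "min (f (hd p)) (f (last p)) \<le> k \<Longrightarrow> k \<le> max (f (hd p)) (f (last p)) \<Longrightarrow> k \<in> f ` V"
  using assms
proof (induction p arbitrary: k)
  case Nil then show ?case by simp
next
  case (Cons a p)
  show ?case
  proof (cases "p = []")
    case True
    then have "k = f a" using Cons.prems by simp
    then show ?thesis using Cons.prems by auto
  next
    case False
    have step: "\<forall>i. Suc i < length p \<longrightarrow> (\<forall>k. min (f (p ! i)) (f (p ! Suc i)) \<le> k
          \<and> k \<le> max (f (p ! i)) (f (p ! Suc i)) \<longrightarrow> k \<in> f ` V)"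
    proof (intro allI impI)
      fix i k assume "Suc i < length p" "min (f (p ! i)) (f (p ! Suc i)) \<le> k
          \<and> k \<le> max (f (p ! i)) (f (p ! Suc i))"
      then show "k \<in> f ` V" using Cons.prems(5)[rule_format, of "Suc i" k] by simp
    qed
    have e0: "\<forall>k. min (f a) (f (hd p)) \<le> k \<and> k \<le> max (f a) (f (hd p)) \<longrightarrow> k \<in> f ` V"
      using Cons.prems(5)[rule_format, of 0] False by (simp add: hd_conv_nth)
    have ih: "min (f (hd p)) (f (last p)) \<le> k \<Longrightarrow> k \<le> max (f (hd p)) (f (last p)) \<Longrightarrow> k \<in> f ` V"
      using Cons.IH[OF _ _ False] Cons.prems(4) step by simp
    have "(min (f a) (f (hd p)) \<le> k \<and> k \<le> max (f a) (f (hd p))) \<or>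
          (min (f (hd p)) (f (last p)) \<le> k \<and> k \<le> max (f (hd p)) (f (last p)))"
      using Cons.prems(1,2) False by (auto simp: min_def max_def split: if_splits)
    then show ?thesis using e0 ih by blast
  qed
qed


lemma not_in_take:
  assumes "distinct P" "n \<le> m" "m < length P"
  shows "P ! m \<notin> set (take n P)"
proof
  assume "P ! m \<in> set (take n P)"
  then obtain i where i: "i < length (take n P)" "take n P ! i = P ! m"
    by (auto simp: in_set_conv_nth)
  then have "P ! i = P ! m" "i < n" by auto
  moreover have "i \<noteq> m" using \<open>i < n\<close> assms(2) by simp
  moreover have "i < length P" using \<open>i < n\<close> assms(2,3) by simp
  ultimately show False using assms(1,3) nth_eq_iff_index_eq[of P i m] by simp
qed

lemma jump_fill:
  assumes u: "unicyclic V E" and e: "E x y" and gap: "tau V E x + 2 \<le> tau V E y"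
    and k: "tau V E x \<le> k" "k \<le> tau V E y"
  shows "k \<in> tau V E ` V"
proof -
  have sg: "simple_graph V E" and c1: "card (cycles V E) = 1"
    using u unfolding unicyclic_def by auto
  obtain P j where P: "is_path V E P" "hd P = y" "length P = tau V E y" "2 \<le> j" "j < length P"
      "P ! j = x" "is_cycle_seq V E (take (Suc j) P)" "{x, y} \<in> cycle_edges (take (Suc j) P)"
    using jump_cycle[OF sg e gap] by blast
  let ?c = "take (Suc j) P"
  have cin: "cycle_edges ?c \<in> cycles V E" using P(7) unfolding cycles_def by blast
  have same: "cycle_edges c' = cycle_edges ?c" if "is_cycle_seq V E c'" for c'
  proof -
    have "cycle_edges c' \<in> cycles V E" using that unfolding cycles_def by blast
    obtain S where S: "cycles V E = {S}" using c1 by (rule card_1_singletonE)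
    show ?thesis using cin S \<open>cycle_edges c' \<in> cycles V E\<close> by simp
  qed
  have dP: "distinct P" and PV: "set P \<subseteq> V" and Pe: "\<And>i. Suc i < length P \<Longrightarrow> E (P ! i) (P ! Suc i)"
    using P(1) unfolding is_path_def by auto
  let ?Q = "drop j P"
  have lip: "tau V E (P ! (j + i)) \<le> tau V E (P ! Suc (j + i)) + 1 \<and>
             tau V E (P ! Suc (j + i)) \<le> tau V E (P ! (j + i)) + 1"
    if i: "Suc (j + i) < length P" for i
  proof (rule ccontr)
    let ?u = "P ! (j + i)" and ?w = "P ! Suc (j + i)"
    have euw: "E ?u ?w" using Pe i by simp
    have wnot: "?w \<notin> set ?c" using not_in_take[OF dP _ i] by simp
    assume "\<not> ?thesis"
    then consider "tau V E ?u + 2 \<le> tau V E ?w" | "tau V E ?w + 2 \<le> tau V E ?u" by linarith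
    then show False
    proof cases
      case 1
      then obtain P' j' where c1': "is_cycle_seq V E (take (Suc j') P')" and c2': "{?u, ?w} \<in> cycle_edges (take (Suc j') P')"
        using jump_cycle[OF sg euw] by blast
      have m: "{?u, ?w} \<in> cycle_edges ?c" using c2' unfolding same[OF c1'] .
      show False using cycle_edge_mem[OF m] wnot by simp
    next
      case 2
      have ewu: "E ?w ?u" using sg_props(4)[OF sg euw] .
      obtain P' j' where c1': "is_cycle_seq V E (take (Suc j') P')" and c2': "{?w, ?u} \<in> cycle_edges (take (Suc j') P')"
        using jump_cycle[OF sg ewu 2] by blast
      have m: "{?u, ?w} \<in> cycle_edges ?c" using c2' unfolding same[OF c1'] insert_commute[of ?w ?u] .
      show False using cycle_edge_mem[OF m] wnot by simp
    qed
  qed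
  have Qne: "?Q \<noteq> []" using P(5) by simp
  have QV: "set ?Q \<subseteq> V" using PV using set_drop_subset[of j P] by blast
  have hdQ: "hd ?Q = x" using P(5,6) by (simp add: hd_drop_conv_nth)
  have lastQ: "last ?Q = last P" using P(5) by simp
  have "is_path V E (rev P)" using path_rev[OF sg P(1)] .
  from tau_ge[OF sg this] have zge: "tau V E y \<le> tau V E (last P)"
    using P(3) P(5) by (simp add: hd_rev)
  have steps: "\<forall>i. Suc i < length ?Q \<longrightarrow> (\<forall>k. min (tau V E (?Q ! i)) (tau V E (?Q ! Suc i)) \<le> k
          \<and> k \<le> max (tau V E (?Q ! i)) (tau V E (?Q ! Suc i)) \<longrightarrow> k \<in> tau V E ` V)"
  proof (intro allI impI)
    fix i k assume i: "Suc i < length ?Q" and kk: "min (tau V E (?Q ! i)) (tau V E (?Q ! Suc i)) \<le> k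
          \<and> k \<le> max (tau V E (?Q ! i)) (tau V E (?Q ! Suc i))"
    have i2: "Suc (j + i) < length P" using i by simp
    have q: "?Q ! i = P ! (j + i)" "?Q ! Suc i = P ! Suc (j + i)" using i by auto
    have mem: "P ! (j + i) \<in> V" "P ! Suc (j + i) \<in> V" using PV i2 by auto
    have "k = tau V E (P ! (j + i)) \<or> k = tau V E (P ! Suc (j + i))"
    proof (cases "tau V E (P ! (j + i)) \<le> tau V E (P ! Suc (j + i))")
      case True then show ?thesis using lip[OF i2] kk unfolding q by (simp; presburger)
    next
      case False then show ?thesis using lip[OF i2] kk unfolding q by (simp; presburger)
    qed
    then show "k \<in> tau V E ` V" using mem by blast
  qed
  show ?thesis
    using list_ivt[OF Qne QV steps, of k] hdQ lastQ zge k by simp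
qed

lemma edge_fill:
  assumes u: "unicyclic V E" and e: "E x y"
    and k: "min (tau V E x) (tau V E y) \<le> k" "k \<le> max (tau V E x) (tau V E y)"
  shows "k \<in> tau V E ` V"
proof -
  have sg: "simple_graph V E" using u unfolding unicyclic_def by auto
  have xV: "x \<in> V" and yV: "y \<in> V" using sg_props[OF sg] e by auto
  show ?thesis
  proof (cases "tau V E x + 2 \<le> tau V E y")
    case True then show ?thesis using jump_fill[OF u e True] k by simp
  next
    case F1: False
    show ?thesis
    proof (cases "tau V E y + 2 \<le> tau V E x")
      case True then show ?thesis using jump_fill[OF u sg_props(4)[OF sg e] True] k by simp
    next
      case F2: False
      have "k = tau V E x \<or> k = tau V E y"
      proof (cases "tau V E x \<le> tau V E y")
        case True then show ?thesis using k F1 F2 by (simp; presburger)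
      next
        case False then show ?thesis using k F1 F2 by (simp; presburger)
      qed
      then show ?thesis using xV yV by blast
    qed
  qed
qed

theorem theorem1p21:
  fixes V :: "'a set" and E :: "'a \<Rightarrow> 'a \<Rightarrow> bool"
  assumes "unicyclic V E"
  defines "d \<equiv> detour_sequence V E"
  shows "\<forall>k::nat. hd d \<le> k \<and> k \<le> last d \<longrightarrow> (\<exists>j < length d. d ! j = k)"
proof (intro allI impI)
  fix k :: nat assume kk: "hd d \<le> k \<and> k \<le> last d"
  have sg: "simple_graph V E" and cg: "connected_graph V E" using assms(1) unfolding unicyclic_def by auto
  have fin: "finite V" using sg_props(1)[OF sg] .
  have Vne: "V \<noteq> {}" using cg unfolding connected_graph_def by auto
  have setd: "set d = tau V E ` V" unfolding d_def detour_sequence_def using fin by simp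
  have dne: "d \<noteq> []" using setd Vne by auto
  obtain a where a: "a \<in> V" "hd d = tau V E a" using setd dne hd_in_set[OF dne] by auto
  obtain b where b: "b \<in> V" "last d = tau V E b" using setd dne last_in_set[OF dne] by auto
  obtain p where p: "is_path V E p" "hd p = a" "last p = b"
    using cg a(1) b(1) unfolding connected_graph_def by blast
  have pne: "p \<noteq> []" and pV: "set p \<subseteq> V" using p(1) unfolding is_path_def by auto
  have steps: "\<forall>i. Suc i < length p \<longrightarrow> (\<forall>k. min (tau V E (p ! i)) (tau V E (p ! Suc i)) \<le> k
          \<and> k \<le> max (tau V E (p ! i)) (tau V E (p ! Suc i)) \<longrightarrow> k \<in> tau V E ` V)"
  proof (intro allI impI)
    fix i k' assume i: "Suc i < length p" and kk': "min (tau V E (p ! i)) (tau V E (p ! Suc i)) \<le> k'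
          \<and> k' \<le> max (tau V E (p ! i)) (tau V E (p ! Suc i))"
    have "E (p ! i) (p ! Suc i)" using p(1) i unfolding is_path_def by blast
    then show "k' \<in> tau V E ` V" by (rule edge_fill[OF assms(1)]) (use kk' in auto)
  qed
  have "k \<in> tau V E ` V"
    using list_ivt[OF pne pV steps, of k] p(2,3) a b kk by simp
  then have "k \<in> set d" using setd by simp
  then show "\<exists>j < length d. d ! j = k" by (simp add: in_set_conv_nth)
qed

end
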